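(* Let $E$ be a Banach lattice. Then the set $B_{UDP}(E)$ of all $uaw$-Dunford-Pettis operators on $E$ is a closed subalgebra (with respect to the operator norm) of the algebra $B(E)$ of all bounded operators on $E$.
   Context: A net $(x_\alpha)$ in a Banach lattice $E$ is $uaw$-convergent to $x$ if $|x_\alpha-x|\wedge u\to 0$ weakly for every $u\in E_+$. A bounded operator $T\colon E\to E$ is $uaw$-Dunford-Pettis if every norm bounded $uaw$-null sequence $(x_n)$ in $E$ satisfies $\|Tx_n\|\to 0$. *)

theory Defs
  imports "HOL-Analysis.Analysis"
begin

definition labs :: "'a::{lattice, uminus} \<Rightarrow> 'a" where
  "labs x = sup x (- x)"

class banach_lattice = banach + lattice +
  assumes add_le_add_right_bl: "x \<le> y \<Longrightarrow> x + z \<le> y + z"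
    and scaleR_nonneg_bl: "0 \<le> x \<Longrightarrow> 0 \<le> a \<Longrightarrow> 0 \<le> a *\<^sub>R x"
    and norm_lattice_bl: "sup x (- x) \<le> sup y (- y) \<Longrightarrow> norm x \<le> norm y"

definition weakly_tendsto :: "(nat \<Rightarrow> 'a::real_normed_vector) \<Rightarrow> 'a \<Rightarrow> bool" where
  "weakly_tendsto x l \<longleftrightarrow> (\<forall>f :: 'a \<Rightarrow>\<^sub>L real. (\<lambda>n. f (x n)) \<longlonglongrightarrow> f l)"

definition uaw_tendsto :: "(nat \<Rightarrow> 'a::banach_lattice) \<Rightarrow> 'a \<Rightarrow> bool" where
  "uaw_tendsto x l \<longleftrightarrow> (\<forall>u. 0 \<le> u \<longrightarrow> weakly_tendsto (\<lambda>n. inf (labs (x n - l)) u) 0)"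

definition uaw_DP :: "('a::banach_lattice \<Rightarrow>\<^sub>L 'a) \<Rightarrow> bool" where
  "uaw_DP T \<longleftrightarrow> (\<forall>x. bounded (range x) \<longrightarrow> uaw_tendsto x 0 \<longrightarrow> (\<lambda>n. norm (T (x n))) \<longlonglongrightarrow> 0)"

end

theory Submission
  imports Defs
begin

lemma null_cmp:
  fixes f :: "nat \<Rightarrow> 'b::real_normed_vector"
  assumes "\<And>n. norm (f n) \<le> g n" "g \<longlonglongrightarrow> 0"
  shows "(\<lambda>n. norm (f n)) \<longlonglongrightarrow> 0"
proof (rule Lim_null_comparison[of "\<lambda>n. norm (f n)" g sequentially])
  show "\<forall>\<^sub>F n in sequentially. norm (norm (f n)) \<le> g n"
    using assms(1) by (simp add: always_eventually)
  show "g \<longlonglongrightarrow> 0" by (rule assms(2))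
qed

lemma udp_zero: "uaw_DP (0::'a::banach_lattice \<Rightarrow>\<^sub>L 'a)"
  unfolding uaw_DP_def by simp

lemma udp_add:
  assumes "uaw_DP (S::'a::banach_lattice \<Rightarrow>\<^sub>L 'a)" "uaw_DP T"
  shows "uaw_DP (S + T)"
  unfolding uaw_DP_def
proof (intro allI impI)
  fix x :: "nat \<Rightarrow> 'a" assume b: "bounded (range x)" and u: "uaw_tendsto x 0"
  have l1: "(\<lambda>n. norm (S (x n))) \<longlonglongrightarrow> 0" and l2: "(\<lambda>n. norm (T (x n))) \<longlonglongrightarrow> 0"
    using assms b u unfolding uaw_DP_def by blast+
  have "(\<lambda>n. norm (S (x n)) + norm (T (x n))) \<longlonglongrightarrow> 0 + 0"
    by (rule tendsto_add[OF l1 l2])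
  hence "(\<lambda>n. norm (S (x n)) + norm (T (x n))) \<longlonglongrightarrow> 0" by simp
  moreover have "\<And>n. norm ((S + T) (x n)) \<le> norm (S (x n)) + norm (T (x n))"
    by (simp add: blinfun.add_left norm_triangle_ineq)
  ultimately show "(\<lambda>n. norm ((S + T) (x n))) \<longlonglongrightarrow> 0"
    by (intro null_cmp)
qed

lemma udp_scale:
  assumes "uaw_DP (T::'a::banach_lattice \<Rightarrow>\<^sub>L 'a)"
  shows "uaw_DP (c *\<^sub>R T)"
  unfolding uaw_DP_def
proof (intro allI impI)
  fix x :: "nat \<Rightarrow> 'a" assume b: "bounded (range x)" and u: "uaw_tendsto x 0"
  have "(\<lambda>n. norm (T (x n))) \<longlonglongrightarrow> 0"
    using assms b u unfolding uaw_DP_def by auto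
  hence "(\<lambda>n. \<bar>c\<bar> * norm (T (x n))) \<longlonglongrightarrow> 0"
    using tendsto_mult_right_zero by blast
  thus "(\<lambda>n. norm ((c *\<^sub>R T) (x n))) \<longlonglongrightarrow> 0" by (simp add: blinfun.scaleR_left)
qed

lemma udp_comp:
  assumes "uaw_DP (T::'a::banach_lattice \<Rightarrow>\<^sub>L 'a)"
  shows "uaw_DP (S o\<^sub>L T)"
  unfolding uaw_DP_def
proof (intro allI impI)
  fix x :: "nat \<Rightarrow> 'a" assume b: "bounded (range x)" and u: "uaw_tendsto x 0"
  have l: "(\<lambda>n. norm (T (x n))) \<longlonglongrightarrow> 0"
    using assms b u unfolding uaw_DP_def by auto
  have l2: "(\<lambda>n. norm (T (x n)) * norm S) \<longlonglongrightarrow> 0"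
    by (rule tendsto_mult_left_zero[OF l])
  have b2: "\<And>n. norm ((S o\<^sub>L T) (x n)) \<le> norm (T (x n)) * norm S"
    by (simp add: norm_blinfun mult.commute)
  show "(\<lambda>n. norm ((S o\<^sub>L T) (x n))) \<longlonglongrightarrow> 0"
    by (rule null_cmp[OF b2 l2])
qed

lemma udp_closed: "closed {T::'a::banach_lattice \<Rightarrow>\<^sub>L 'a. uaw_DP T}"
  unfolding closed_sequential_limits
proof (intro allI impI, elim conjE)
  fix Tk :: "nat \<Rightarrow> 'a \<Rightarrow>\<^sub>L 'a" and T
  assume mem: "\<forall>n. Tk n \<in> {T. uaw_DP T}" and lim: "Tk \<longlonglongrightarrow> T"
  show "T \<in> {T. uaw_DP T}"
    unfolding mem_Collect_eq uaw_DP_def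
  proof (intro allI impI)
    fix x :: "nat \<Rightarrow> 'a" assume b: "bounded (range x)" and u: "uaw_tendsto x 0"
    obtain M0 where M0: "\<And>n. norm (x n) \<le> M0" using b unfolding bounded_iff by auto
    define M where "M = max M0 1"
    have M: "\<And>n. norm (x n) \<le> M" "M > 0" using M0 unfolding M_def by (auto intro: order.trans[OF _ max.cobounded1])
    show "(\<lambda>n. norm (T (x n))) \<longlonglongrightarrow> 0"
    proof (rule LIMSEQ_I)
      fix e :: real assume e: "0 < e"
      have "\<forall>\<^sub>F k in sequentially. dist (Tk k) T < e / (2 * M)"
        using lim e M(2) by (simp add: tendsto_iff)
      then obtain K where "\<forall>k\<ge>K. dist (Tk k) T < e / (2 * M)"
        unfolding eventually_sequentially by blast
      then have "dist (Tk K) T < e / (2 * M)" by blast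
      define k where "k = K"
      have k: "norm (Tk k - T) < e / (2 * M)"
        using \<open>dist (Tk K) T < e / (2 * M)\<close> unfolding k_def dist_norm .
      have "(\<lambda>n. norm (Tk k (x n))) \<longlonglongrightarrow> 0"
        using mem b u unfolding uaw_DP_def by auto
      moreover have "e/2 > 0" using e by simp
      ultimately obtain N where N: "\<And>n. n \<ge> N \<Longrightarrow> norm (norm (Tk k (x n)) - 0) < e/2"
        using LIMSEQ_D by blast
      show "\<exists>N. \<forall>n\<ge>N. norm (norm (T (x n)) - 0) < e"
      proof (intro exI allI impI)
        fix n assume n: "n \<ge> N"
        have eq: "T (x n) = (T - Tk k) (x n) + Tk k (x n)"
          by (simp add: blinfun.diff_left)
        have "norm (T (x n)) \<le> norm ((T - Tk k) (x n)) + norm (Tk k (x n))"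
          by (subst eq) (rule norm_triangle_ineq)
        also have "norm ((T - Tk k) (x n)) \<le> norm (T - Tk k) * norm (x n)"
          by (rule norm_blinfun)
        also have "\<dots> \<le> norm (T - Tk k) * M" using M by (simp add: mult_left_mono)
        also have "\<dots> \<le> e / (2*M) * M"
          using k M(2) by (intro mult_right_mono) (simp_all add: norm_minus_commute)
        also have "\<dots> = e/2" using M(2) by simp
        finally show "norm (norm (T (x n)) - 0) < e" using N[OF n] by simp
      qed
    qed
  qed
qed

theorem proposition2p34:
  fixes B_UDP :: "('a::banach_lattice \<Rightarrow>\<^sub>L 'a) set"
  defines "B_UDP \<equiv> {T. uaw_DP T}"
  shows "subspace B_UDP \<and> (\<forall>S\<in>B_UDP. \<forall>T\<in>B_UDP. S o\<^sub>L T \<in> B_UDP) \<and> closed B_UDP"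
proof (intro conjI)
  show "subspace B_UDP"
    unfolding B_UDP_def subspace_def
    using udp_zero udp_add udp_scale by blast
  show "\<forall>S\<in>B_UDP. \<forall>T\<in>B_UDP. S o\<^sub>L T \<in> B_UDP"
    unfolding B_UDP_def using udp_comp by blast
  show "closed B_UDP" unfolding B_UDP_def by (rule udp_closed)
qed

end
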